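(* Let $G=(V,E,\omega)$ be an undirected graph on $n$ vertices with positive edge weights, and let $k\ge 1$ be an integer. Set $\nu=1/(2^k-1)$ and let $V=A_0\supseteq A_1\supseteq\dots\supseteq A_{k-1}\supseteq A_k=\emptyset$ be obtained by including, for each $0\le i<k-1$, every element of $A_i$ in $A_{i+1}$ independently with probability $p_i=n^{-2^i\nu}$. For $0\le i\le k-1$ and $u\in A_i\setminus A_{i+1}$, let $p(u)\in A_{i+1}$ be a vertex with $d_G(u,p(u))=d_G(u,A_{i+1})$ (undefined if $i=k-1$), and let the bunch be $$B(u)=\{v\in A_i : d_G(u,v)<d_G(u,A_{i+1})\}\cup\{p(u)\}$$ (with $d_G(u,\emptyset)=\infty$ and $\{p(u)\}=\emptyset$ when $i=k-1$). Let $H=\{(u,v): u\in V,\ v\in B(u)\}$, where the edge $(u,v)$ has weight $d_G(u,v)$. Fix any $0<\delta<1/(8k)$ and any $x,y\in V$. Then for every $0\le i\le k-1$ at least one of the following holds: (1) $d^{((3/\delta)^i)}_{G\cup H}(x,y)\le (1+8\delta i)\, d_G(x,y)$; (2) there exists $z\in A_{i+1}$ such that $d^{((3/\delta)^i)}_{G\cup H}(x,z)\le 2\, d_G(x,y)$.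
   Context: $d_G(u,v)$ is the shortest-path distance in $G$, and $d_G(u,S)=\min_{s\in S}d_G(u,s)$. For a weighted graph $F$ and $t>0$, $d^{(t)}_F(u,v)$ denotes the minimum length of a $u$–$v$ path in $F$ with at most $t$ edges (hops). $G\cup H$ is the graph on $V$ with edge set $E\cup H$ (with the given weights). *)

theory Defs
  imports "HOL-Library.Extended_Real"
begin

text \<open>A weighted graph on vertex set V is given by a weight function
  W :: 'a => 'a => ereal, where W u v = infinity means "no edge".
  Walks are nonempty vertex lists; a walk with m+1 vertices has m hops.\<close>

fun walk_len :: "('a \<Rightarrow> 'a \<Rightarrow> ereal) \<Rightarrow> 'a list \<Rightarrow> ereal" where
  "walk_len W (u # v # ps) = W u v + walk_len W (v # ps)"
| "walk_len W _ = 0"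

definition walks :: "'a set \<Rightarrow> 'a \<Rightarrow> 'a \<Rightarrow> 'a list set" where
  "walks V u v = {ps. ps \<noteq> [] \<and> hd ps = u \<and> last ps = v \<and> set ps \<subseteq> V}"

definition gdist :: "'a set \<Rightarrow> ('a \<Rightarrow> 'a \<Rightarrow> ereal) \<Rightarrow> 'a \<Rightarrow> 'a \<Rightarrow> ereal" where
  "gdist V W u v = (INF ps \<in> walks V u v. walk_len W ps)"

definition hopdist :: "'a set \<Rightarrow> ('a \<Rightarrow> 'a \<Rightarrow> ereal) \<Rightarrow> real \<Rightarrow> 'a \<Rightarrow> 'a \<Rightarrow> ereal" where
  "hopdist V W t u v = (INF ps \<in> {ps \<in> walks V u v. real (length ps - 1) \<le> t}. walk_len W ps)"

definition setdist :: "'a set \<Rightarrow> ('a \<Rightarrow> 'a \<Rightarrow> ereal) \<Rightarrow> 'a \<Rightarrow> 'a set \<Rightarrow> ereal" where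
  "setdist V W u S = (INF s \<in> S. gdist V W u s)"

definition graph_weight :: "('a \<times> 'a) set \<Rightarrow> ('a \<Rightarrow> 'a \<Rightarrow> real) \<Rightarrow> 'a \<Rightarrow> 'a \<Rightarrow> ereal" where
  "graph_weight E w u v = (if (u, v) \<in> E then ereal (w u v) else \<infinity>)"

definition bunch_edges :: "'a set \<Rightarrow> ('a \<Rightarrow> 'a \<Rightarrow> ereal) \<Rightarrow> nat \<Rightarrow> (nat \<Rightarrow> 'a set) \<Rightarrow> ('a \<Rightarrow> 'a)
    \<Rightarrow> ('a \<times> 'a) set" where
  "bunch_edges V W k A p = {(u, v). \<exists>i<k. u \<in> A i - A (Suc i) \<and>
      ((v \<in> A i \<and> gdist V W u v < setdist V W u (A (Suc i))) \<or> (A (Suc i) \<noteq> {} \<and> v = p u))}"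

text \<open>Weights of the undirected graph G union H: an H-edge (u,v) has weight d_G(u,v);
  if a pair is an edge of both, the cheaper copy is usable.\<close>
definition union_weight :: "'a set \<Rightarrow> ('a \<Rightarrow> 'a \<Rightarrow> ereal) \<Rightarrow> ('a \<times> 'a) set \<Rightarrow> 'a \<Rightarrow> 'a \<Rightarrow> ereal" where
  "union_weight V W H u v = min (W u v)
     (if (u, v) \<in> H \<or> (v, u) \<in> H then gdist V W u v else \<infinity>)"

end

theory Submission
  imports Defs
begin


lemma walk_len_nonneg: "(\<And>u v. W u v \<ge> 0) \<Longrightarrow> walk_len W ps \<ge> 0"
  by (induction W ps rule: walk_len.induct) auto

lemma walk_len_append:
  "xs \<noteq> [] \<Longrightarrow> ys \<noteq> [] \<Longrightarrow>
   walk_len W (xs @ ys) = walk_len W xs + W (last xs) (hd ys) + walk_len W ys"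
proof (induction xs)
  case Nil then show ?case by simp
next
  case (Cons x xs)
  show ?case
  proof (cases xs)
    case Nil
    then show ?thesis using Cons by (cases ys) auto
  next
    case (Cons x2 xs2)
    then show ?thesis using Cons.IH Cons.prems by (auto simp: add.assoc)
  qed
qed

lemma walk_len_glue:
  assumes "p \<noteq> []" "q \<noteq> []" "last p = hd q"
  shows "walk_len W (p @ tl q) = walk_len W p + walk_len W q"
proof (cases q)
  case Nil then show ?thesis using assms by simp
next
  case (Cons y q')
  show ?thesis
  proof (cases q')
    case Nil then show ?thesis using Cons by simp
  next
    case (Cons y2 q2)
    then show ?thesis using walk_len_append[of p q' W] assms \<open>q = y # q'\<close>
      by (simp add: add.assoc)
  qed
qed

lemma walk_len_rev:
  assumes "\<And>u v. W u v = W v u"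
  shows "walk_len W (rev ps) = walk_len W ps"
proof (induction ps)
  case Nil then show ?case by simp
next
  case (Cons x xs)
  show ?case
  proof (cases xs)
    case Nil then show ?thesis by simp
  next
    case (Cons y ys)
    have "walk_len W (rev (x # xs)) = walk_len W (rev xs @ [x])" by simp
    also have "\<dots> = walk_len W (rev xs) + W y x"
      using walk_len_append[of "rev xs" "[x]" W] Cons by simp
    also have "\<dots> = walk_len W (x # xs)" using Cons.IH Cons assms[of y x]
      by (simp add: add.commute)
    finally show ?thesis .
  qed
qed

lemma walks_iff: "ps \<in> walks V u v \<longleftrightarrow> ps \<noteq> [] \<and> hd ps = u \<and> last ps = v \<and> set ps \<subseteq> V"
  by (simp add: walks_def)

lemma hop_le_walk:
  "ps \<in> walks V u v \<Longrightarrow> real (length ps - 1) \<le> t \<Longrightarrow> hopdist V W t u v \<le> walk_len W ps"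
  unfolding hopdist_def by (rule INF_lower) auto

lemma gdist_le_walk:
  "ps \<in> walks V u v \<Longrightarrow> gdist V W u v \<le> walk_len W ps"
  unfolding gdist_def by (rule INF_lower) auto

lemma hop_mono:
  "t \<le> t' \<Longrightarrow> hopdist V W t' u v \<le> hopdist V W t u v"
  unfolding hopdist_def by (rule INF_superset_mono) auto

lemma hop_refl: "u \<in> V \<Longrightarrow> 0 \<le> t \<Longrightarrow> hopdist V W t u u \<le> 0"
  using hop_le_walk[of "[u]" V u u t W] by (simp add: walks_iff)

lemma hop_edge: "u \<in> V \<Longrightarrow> v \<in> V \<Longrightarrow> 1 \<le> t \<Longrightarrow> hopdist V W t u v \<le> W u v"
  using hop_le_walk[of "[u,v]" V u v t W] by (simp add: walks_iff)

lemma hop_attain: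
  assumes "finite V" "hopdist V W t u v \<le> ereal X"
  shows "\<exists>ps \<in> walks V u v. real (length ps - 1) \<le> t \<and> walk_len W ps \<le> ereal X"
proof -
  define S where "S = {ps \<in> walks V u v. real (length ps - 1) \<le> t}"
  have "S \<subseteq> {ps. set ps \<subseteq> V \<and> length ps \<le> nat \<lfloor>t\<rfloor> + 1}"
    unfolding S_def walks_def by auto linarith
  then have fS: "finite S" using finite_lists_length_le[OF assms(1)] finite_subset by blast
  have ne: "S \<noteq> {}"
  proof
    assume "S = {}"
    then have "hopdist V W t u v = \<infinity>" unfolding hopdist_def S_def[symmetric]
      by (simp add: top_ereal_def)
    then show False using assms(2) by simp
  qed
  have "Inf (walk_len W ` S) = Min (walk_len W ` S)"
    using fS ne by (intro cInf_eq_Min) auto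
  moreover have "Min (walk_len W ` S) \<in> walk_len W ` S" using fS ne by (intro Min_in) auto
  ultimately obtain ps where "ps \<in> S" "walk_len W ps = hopdist V W t u v"
    unfolding hopdist_def S_def by auto
  then show ?thesis using assms(2) unfolding S_def by auto
qed

lemma hop_concat:
  assumes "finite V" "hopdist V W t1 a b \<le> ereal X" "hopdist V W t2 b c \<le> ereal Y"
  shows "hopdist V W (t1 + t2) a c \<le> ereal (X + Y)"
proof -
  obtain p where p: "p \<in> walks V a b" "real (length p - 1) \<le> t1" "walk_len W p \<le> ereal X"
    using hop_attain[OF assms(1,2)] by blast
  obtain q where q: "q \<in> walks V b c" "real (length q - 1) \<le> t2" "walk_len W q \<le> ereal Y"
    using hop_attain[OF assms(1,3)] by blast
  have pq: "p @ tl q \<in> walks V a c" using p(1) q(1) unfolding walks_def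
    by (cases q) auto
  have "real (length (p @ tl q) - 1) \<le> t1 + t2" using p(1,2) q(1,2) unfolding walks_def
    by (cases p; cases q) auto
  then have "hopdist V W (t1 + t2) a c \<le> walk_len W (p @ tl q)" by (rule hop_le_walk[OF pq])
  also have "\<dots> = walk_len W p + walk_len W q" using p(1) q(1)
    by (intro walk_len_glue) (auto simp: walks_def)
  also have "\<dots> \<le> ereal X + ereal Y" using p(3) q(3) by (rule add_mono)
  finally show ?thesis by simp
qed

lemma hop_sym:
  assumes "\<And>u v. W u v = W v u"
  shows "hopdist V W t u v = hopdist V W t v u"
proof -
  have "hopdist V W t u v \<le> hopdist V W t v u" for u v
    unfolding hopdist_def
  proof (rule INF_greatest)
    fix ps assume "ps \<in> {ps \<in> walks V v u. real (length ps - 1) \<le> t}"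
    then have "rev ps \<in> walks V u v" "real (length (rev ps) - 1) \<le> t"
      by (auto simp: walks_def hd_rev last_rev)
    then have "hopdist V W t u v \<le> walk_len W (rev ps)" by (rule hop_le_walk)
    then show "(INF ps \<in> {ps \<in> walks V u v. real (length ps - 1) \<le> t}. walk_len W ps) \<le> walk_len W ps"
      unfolding hopdist_def walk_len_rev[OF assms] .
  qed
  then show ?thesis by (meson antisym)
qed

lemma gdist_sym:
  assumes "\<And>u v. W u v = W v u"
  shows "gdist V W u v = gdist V W v u"
proof -
  have "gdist V W u v \<le> gdist V W v u" for u v
    unfolding gdist_def
  proof (rule INF_greatest)
    fix ps assume "ps \<in> walks V v u"
    then have "rev ps \<in> walks V u v"
      by (auto simp: walks_def hd_rev last_rev)
    then have "gdist V W u v \<le> walk_len W (rev ps)" by (rule gdist_le_walk)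
    then show "(INF ps \<in> walks V u v. walk_len W ps) \<le> walk_len W ps"
      unfolding gdist_def walk_len_rev[OF assms] .
  qed
  then show ?thesis by (meson antisym)
qed

lemma gdist_nonneg: "(\<And>u v. W u v \<ge> 0) \<Longrightarrow> gdist V W u v \<ge> 0"
  unfolding gdist_def by (rule INF_greatest) (rule walk_len_nonneg)

lemma shortcut:
  assumes "\<And>u v. W u v \<ge> 0"
  shows "ps \<in> walks V u v \<Longrightarrow> \<exists>qs \<in> walks V u v. distinct qs \<and> walk_len W qs \<le> walk_len W ps"
proof (induction ps rule: length_induct)
  case (1 ps)
  show ?case
  proof (cases "distinct ps")
    case True then show ?thesis using 1 by auto
  next
    case False
    then obtain xs ys zs y where ps: "ps = xs @ [y] @ ys @ [y] @ zs"
      using not_distinct_decomp by blast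
    define ps' where "ps' = xs @ [y] @ zs"
    have w': "ps' \<in> walks V u v" using "1.prems" unfolding ps ps'_def walks_def
      by (cases xs) auto
    have e1: "walk_len W ps = walk_len W (xs @ [y]) + walk_len W (y # ys @ [y] @ zs)"
      using walk_len_glue[of "xs @ [y]" "y # ys @ [y] @ zs" W] unfolding ps by simp
    have e2: "walk_len W (y # ys @ [y] @ zs) = walk_len W (y # ys @ [y]) + walk_len W (y # zs)"
      using walk_len_glue[of "y # ys @ [y]" "y # zs" W] by simp
    have "walk_len W ps = walk_len W (xs @ [y]) + (walk_len W (y # ys @ [y]) + walk_len W (y # zs))"
      using e1 e2 by simp
    also have "\<dots> \<ge> walk_len W (xs @ [y]) + walk_len W (y # zs)"
      using walk_len_nonneg[where W=W and ps="y # ys @ [y]", OF assms]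
      by (intro add_left_mono) (use add_mono[OF walk_len_nonneg[where W=W and ps="y # ys @ [y]", OF assms] order_refl, of "walk_len W (y # zs)"] in simp)
    moreover have "walk_len W (xs @ [y]) + walk_len W (y # zs) = walk_len W ps'"
      unfolding ps'_def using walk_len_glue[of "xs @ [y]" "y # zs" W] by simp
    ultimately have le: "walk_len W ps' \<le> walk_len W ps" by simp
    have "length ps' < length ps" unfolding ps ps'_def by simp
    then obtain qs where "qs \<in> walks V u v" "distinct qs" "walk_len W qs \<le> walk_len W ps'"
      using "1.IH" w' by blast
    then show ?thesis using le by (meson order_trans)
  qed
qed

lemma gdist_attain:
  assumes "finite V" "\<And>u v. W u v \<ge> 0" "u \<in> V" "v \<in> V"
  shows "\<exists>ps \<in> walks V u v. walk_len W ps = gdist V W u v"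
proof -
  define S where "S = {qs \<in> walks V u v. distinct qs}"
  have "S \<subseteq> {ps. set ps \<subseteq> V \<and> length ps \<le> card V}"
    unfolding S_def walks_def using assms(1) by (auto intro: card_mono simp flip: distinct_card)
  then have fS: "finite S" using finite_lists_length_le[OF assms(1)] finite_subset by blast
  have "[u, v] \<in> walks V u v" using assms by (simp add: walks_def)
  then obtain q0 where "q0 \<in> S" using shortcut[where W=W, OF assms(2)] unfolding S_def by blast
  then have ne: "S \<noteq> {}" by auto
  have "Min (walk_len W ` S) \<in> walk_len W ` S" using fS ne by (intro Min_in) auto
  then obtain qs where qs: "qs \<in> S" "walk_len W qs = Min (walk_len W ` S)" by auto
  have "walk_len W qs \<le> gdist V W u v"
    unfolding gdist_def
  proof (rule INF_greatest)
    fix ps assume "ps \<in> walks V u v"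
    then obtain q where "q \<in> S" "walk_len W q \<le> walk_len W ps"
      using shortcut[where W=W, OF assms(2)] unfolding S_def by blast
    moreover have "walk_len W qs \<le> walk_len W q" using qs fS \<open>q \<in> S\<close> by auto
    ultimately show "walk_len W qs \<le> walk_len W ps" by simp
  qed
  moreover have "gdist V W u v \<le> walk_len W qs" using qs(1) unfolding S_def
    by (auto intro: gdist_le_walk)
  ultimately show ?thesis using qs(1) unfolding S_def by (intro bexI[of _ qs]) auto
qed

lemma gdist_triangle:
  assumes "finite V" "\<And>u v. W u v \<ge> 0" "a \<in> V" "b \<in> V" "c \<in> V"
  shows "gdist V W a c \<le> gdist V W a b + gdist V W b c"
proof -
  obtain p where p: "p \<in> walks V a b" "walk_len W p = gdist V W a b"
    using gdist_attain[where W=W, OF assms(1,2,3,4)] by blast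
  obtain q where q: "q \<in> walks V b c" "walk_len W q = gdist V W b c"
    using gdist_attain[where W=W, OF assms(1,2,4,5)] by blast
  have pq: "p @ tl q \<in> walks V a c" using p(1) q(1) unfolding walks_def
    by (cases q) auto
  have "gdist V W a c \<le> walk_len W (p @ tl q)" by (rule gdist_le_walk[OF pq])
  also have "\<dots> = walk_len W p + walk_len W q" using p(1) q(1)
    by (intro walk_len_glue) (auto simp: walks_def)
  finally show ?thesis using p q by simp
qed



lemma ereal_sum3_fin:
  fixes x y z :: ereal
  assumes "x \<ge> 0" "y \<ge> 0" "z \<ge> 0" "x + y + z = ereal L"
  shows "\<exists>a b c. x = ereal a \<and> y = ereal b \<and> z = ereal c \<and> a + b + c = L \<and> a \<ge> 0 \<and> b \<ge> 0 \<and> c \<ge> 0"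
  using assms by (cases x; cases y; cases z) auto

definition hb :: "real \<Rightarrow> real \<Rightarrow> real \<Rightarrow> real \<Rightarrow> real" where
  "hb l d D s = l * (2 * s / (d * D) + 1)"

lemma hb_mono: "0 \<le> l \<Longrightarrow> 0 < d * D \<Longrightarrow> s \<le> s' \<Longrightarrow> hb l d D s \<le> hb l d D s'"
  unfolding hb_def by (intro mult_left_mono add_right_mono divide_right_mono) auto

lemma hb_ge: "0 \<le> l \<Longrightarrow> 0 < d * D \<Longrightarrow> 0 \<le> s \<Longrightarrow> l \<le> hb l d D s"
  using hb_mono[of l d D 0 s] by (simp add: hb_def)

lemma hb_step:
  assumes "1 \<le> l" "0 < d * D" "d * D \<le> s' - s"
  shows "hb l d D s + 1 + l \<le> hb l d D s'"
proof -
  have "1 \<le> (s' - s) / (d * D)" using assms by (simp add: divide_simps)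
  then have "l * 1 \<le> l * ((s' - s) / (d * D))" using assms by (intro mult_left_mono) auto
  then have "2 * l \<le> 2 * l * ((s' - s) / (d * D))" by simp
  moreover have "hb l d D s' - hb l d D s = 2 * l * ((s' - s) / (d * D))"
    unfolding hb_def by (simp add: algebra_simps diff_divide_distrib[symmetric])
  ultimately show ?thesis using assms by linarith
qed

lemma hb_budget:
  assumes "1 \<le> l" "0 < d" "d < 1/8" "0 < D" "s1 + s2 \<le> D"
  shows "hb l d D s1 + hb l d D s2 + 2 * l + 3 \<le> (3 / d) * l"
proof -
  have e: "hb l d D s1 + hb l d D s2 = l * (2 * ((s1 + s2) / (d * D)) + 2)"
    unfolding hb_def by (simp add: algebra_simps add_divide_distrib[symmetric])
  have "(s1 + s2) / (d * D) \<le> D / (d * D)" using assms by (intro divide_right_mono) auto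
  also have "\<dots> = 1 / d" using assms by simp
  finally have X: "(s1 + s2) / (d * D) \<le> 1 / d" .
  have "l * (2 * ((s1 + s2) / (d * D)) + 2) \<le> l * (2 * (1/d) + 2)"
    using assms X by (intro mult_left_mono) linarith+
  also have "\<dots> = 2 * (l / d) + 2 * l" by (simp add: algebra_simps)
  finally have f1: "hb l d D s1 + hb l d D s2 \<le> 2 * (l / d) + 2 * l" using e by simp
  have "8 < 1 / d" using assms by (simp add: field_simps)
  then have "l * 8 \<le> l * (1/d)" using assms by (intro mult_left_mono) auto
  then have f2: "8 * l \<le> l / d" by simp
  have f3: "(3/d) * l = 3 * (l / d)" by simp
  show ?thesis using f1 f2 f3 assms by linarith
qed

locale setting =
  fixes V :: "'a set" and E :: "('a \<times> 'a) set" and w :: "'a \<Rightarrow> 'a \<Rightarrow> real"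
    and k :: nat and A :: "nat \<Rightarrow> 'a set" and p :: "'a \<Rightarrow> 'a" and \<delta> :: real
  assumes finV: "finite V"
    and E_sym: "\<And>u v. (u, v) \<in> E \<Longrightarrow> (v, u) \<in> E"
    and w_sym: "\<And>u v. (u, v) \<in> E \<Longrightarrow> w u v = w v u"
    and w_pos: "\<And>u v. (u, v) \<in> E \<Longrightarrow> w u v > 0"
    and k_pos: "k \<ge> 1"
    and A0: "A 0 = V"
    and A_mono: "\<And>i. i < k \<Longrightarrow> A (Suc i) \<subseteq> A i"
    and p_def: "\<And>i u. i < k \<Longrightarrow> u \<in> A i - A (Suc i) \<Longrightarrow> A (Suc i) \<noteq> {} \<Longrightarrow>
        p u \<in> A (Suc i) \<and>
        gdist V (graph_weight E w) u (p u) = setdist V (graph_weight E w) u (A (Suc i))"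
    and delta: "0 < \<delta>" "\<delta> < 1 / (8 * real k)"
begin

abbreviation "W \<equiv> graph_weight E w"
abbreviation "H \<equiv> bunch_edges V W k A p"
abbreviation "U \<equiv> union_weight V W H"
abbreviation "gd \<equiv> gdist V W"
abbreviation "hop \<equiv> hopdist V U"

lemma W_pos: "W u v > 0"
  using w_pos by (auto simp: graph_weight_def)

lemma W_nonneg: "W u v \<ge> 0"
  using W_pos[of u v] by simp

lemma W_sym: "W u v = W v u"
  using E_sym w_sym by (auto simp: graph_weight_def)

lemma gd_nonneg: "gd u v \<ge> 0"
  by (rule gdist_nonneg) (rule W_nonneg)

lemma gd_sym: "gd u v = gd v u"
  by (rule gdist_sym) (rule W_sym)

lemma gd_tri: "a \<in> V \<Longrightarrow> b \<in> V \<Longrightarrow> c \<in> V \<Longrightarrow> gd a c \<le> gd a b + gd b c"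
  by (rule gdist_triangle[OF finV W_nonneg])

lemma U_le_W: "U u v \<le> W u v"
  by (simp add: union_weight_def)

lemma U_sym: "U u v = U v u"
proof -
  have "((u,v)\<in>H \<or> (v,u)\<in>H) \<longleftrightarrow> ((v,u)\<in>H \<or> (u,v)\<in>H)" by blast
  then show ?thesis unfolding union_weight_def by (simp only: W_sym[of u v] gd_sym[of u v])
qed

lemma U_nonneg: "U u v \<ge> 0"
  using W_nonneg gd_nonneg by (simp add: union_weight_def)

lemma U_H: "(u, v) \<in> H \<Longrightarrow> U u v \<le> gd u v"
  by (simp add: union_weight_def)

lemma U_ge: "u \<in> V \<Longrightarrow> v \<in> V \<Longrightarrow> gd u v \<le> U u v"
proof -
  assume "u \<in> V" "v \<in> V"
  then have "gd u v \<le> W u v" using gdist_le_walk[of "[u,v]" V u v W] by (simp add: walks_iff)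
  then show ?thesis by (simp add: union_weight_def)
qed

lemma walk_U_ge: "ps \<noteq> [] \<Longrightarrow> set ps \<subseteq> V \<Longrightarrow> gd (hd ps) (last ps) \<le> walk_len U ps"
proof (induction ps)
  case Nil then show ?case by simp
next
  case (Cons x xs)
  show ?case
  proof (cases xs)
    case Nil
    then show ?thesis using Cons.prems gdist_le_walk[of "[x]" V x x W] by (simp add: walks_iff)
  next
    case (Cons y ys)
    have "gd x (last xs) \<le> gd x y + gd y (last xs)"
      using Cons.prems \<open>xs = y # ys\<close> by (intro gd_tri) auto
    also have "\<dots> \<le> U x y + walk_len U xs"
      using Cons.IH Cons.prems \<open>xs = y # ys\<close> U_ge[of x y] by (intro add_mono) auto
    finally show ?thesis using \<open>xs = y # ys\<close> by simp
  qed
qed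

lemma hop_ge: "gd a b \<le> hop t a b"
  unfolding hopdist_def
proof (rule INF_greatest)
  fix ps assume "ps \<in> {ps \<in> walks V a b. real (length ps - 1) \<le> t}"
  then show "gd a b \<le> walk_len U ps" using walk_U_ge[of ps] by (auto simp: walks_iff)
qed

lemma hop_symU: "hop t a b = hop t b a"
  by (rule hop_sym) (rule U_sym)

lemma A_sub: "i \<le> k \<Longrightarrow> A i \<subseteq> V"
proof (induction i)
  case 0 then show ?case using A0 by simp
next
  case (Suc i) then show ?case using A_mono[of i] by auto
qed

lemma setdist_le: "z \<in> S \<Longrightarrow> setdist V W u S \<le> gd u z"
  unfolding setdist_def by (rule INF_lower)

lemma setdist_empty: "setdist V W u {} = \<infinity>"
  unfolding setdist_def by (simp add: top_ereal_def)

lemma H_bunch: "j < k \<Longrightarrow> u \<in> A j - A (Suc j) \<Longrightarrow> v \<in> A j \<Longrightarrow>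
   gd u v < setdist V W u (A (Suc j)) \<Longrightarrow> (u, v) \<in> H"
  unfolding bunch_edges_def by blast

lemma H_p: "j < k \<Longrightarrow> u \<in> A j - A (Suc j) \<Longrightarrow> A (Suc j) \<noteq> {} \<Longrightarrow> (u, p u) \<in> H"
  unfolding bunch_edges_def by blast

lemma gd_zero: assumes "a \<in> V" "b \<in> V" "gd a b = 0" shows "a = b"
proof -
  obtain ps where ps: "ps \<in> walks V a b" "walk_len W ps = 0"
    using gdist_attain[where W=W, OF finV W_nonneg assms(1,2)] assms(3) by auto
  show ?thesis
  proof (cases ps)
    case Nil then show ?thesis using ps by (simp add: walks_iff)
  next
    case (Cons x xs)
    show ?thesis
    proof (cases xs)
      case Nil then show ?thesis using ps Cons by (auto simp: walks_iff)
    next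
      case (Cons y ys)
      have "W x y + walk_len W xs > 0"
        using W_pos[of x y] walk_len_nonneg[where W=W and ps=xs, OF W_nonneg]
        by (metis add_pos_nonneg)
      then show ?thesis using ps \<open>ps = x # xs\<close> Cons by simp
    qed
  qed
qed


lemma scan:
  fixes l c D :: real and i :: nat
  assumes IH: "\<forall>a\<in>V. \<forall>b\<in>V. \<forall>r. gd a b \<le> ereal r \<longrightarrow>
      (hop l a b \<le> ereal (c * r) \<or> (\<exists>z\<in>A (Suc i). hop l a z \<le> ereal (2 * r)))"
    and l1: "1 \<le> l" and c1: "1 \<le> c" and D0: "0 < D"
  shows "ps \<noteq> [] \<Longrightarrow> set ps \<subseteq> V \<Longrightarrow> walk_len W ps = ereal L \<Longrightarrow>
    hop (hb l \<delta> D L) (hd ps) (last ps) \<le> ereal (c * L) \<or>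
    (\<exists>u qs L1 L2. qs \<noteq> [] \<and> set qs \<subseteq> V \<and> hd qs = u \<and> last qs = last ps \<and>
       walk_len W qs = ereal L2 \<and> L1 + L2 \<le> L \<and>
       hop (hb l \<delta> D L1 + 1) (hd ps) u \<le> ereal (c * L1) \<and>
       (\<exists>z\<in>A (Suc i). hop l u z \<le> ereal (2 * \<delta> * D)))"
proof (induction ps arbitrary: L rule: length_induct)
  case (1 ps)
  define a where "a = hd ps"
  define b where "b = last ps"
  have dD: "0 < \<delta> * D" using delta D0 by simp
  have aV: "a \<in> V" and bV: "b \<in> V" using "1.prems" unfolding a_def b_def by auto
  have psw: "ps \<in> walks V a b" using "1.prems" unfolding a_def b_def walks_iff by auto
  have L0: "0 \<le> L" using walk_len_nonneg[where W=W and ps=ps, OF W_nonneg] "1.prems" by simp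
  have gab: "gd a b \<le> ereal L" using gdist_le_walk[OF psw, of W] "1.prems" by simp
  show ?case
  proof (cases "L \<le> \<delta> * D")
    case True
    from IH aV bV gab have
      "hop l a b \<le> ereal (c * L) \<or> (\<exists>z\<in>A (Suc i). hop l a z \<le> ereal (2 * L))" by blast
    then show ?thesis
    proof
      assume h: "hop l a b \<le> ereal (c * L)"
      have "hop (hb l \<delta> D L) a b \<le> hop l a b"
        using hb_ge[of l \<delta> D L] l1 dD L0 by (intro hop_mono) auto
      then show ?thesis using h unfolding a_def b_def by (meson disjI1 order_trans)
    next
      assume "\<exists>z\<in>A (Suc i). hop l a z \<le> ereal (2 * L)"
      then obtain z where z: "z \<in> A (Suc i)" "hop l a z \<le> ereal (2 * L)" by blast
      have "hop l a z \<le> ereal (2 * \<delta> * D)" using z True by (auto intro: order_trans)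
      moreover have "hop (hb l \<delta> D 0 + 1) a a \<le> ereal (c * 0)"
        using hop_refl[OF aV, of "l+1" U] l1 by (simp add: hb_def zero_ereal_def)
      ultimately have "\<exists>u qs L1 L2. qs \<noteq> [] \<and> set qs \<subseteq> V \<and> hd qs = u \<and> last qs = last ps \<and>
       walk_len W qs = ereal L2 \<and> L1 + L2 \<le> L \<and>
       hop (hb l \<delta> D L1 + 1) (hd ps) u \<le> ereal (c * L1) \<and>
       (\<exists>z\<in>A (Suc i). hop l u z \<le> ereal (2 * \<delta> * D))"
        using "1.prems" z(1) unfolding a_def
        by (intro exI[of _ a] exI[of _ ps] exI[of _ 0] exI[of _ L]) (auto simp: a_def)
      then show ?thesis by blast
    qed
  next
    case False
    define Q where "Q t \<longleftrightarrow> walk_len W (drop t ps) \<le> ereal (\<delta> * D)" for t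
    have "drop (length ps - 1) ps = [last ps]" using "1.prems"
      by (cases ps rule: rev_cases) auto
    then have Qm: "Q (length ps - 1)" unfolding Q_def using dD by simp
    have nQ0: "\<not> Q 0" unfolding Q_def using False "1.prems" by simp
    define t where "t = (LEAST t. Q t)"
    have Qt: "Q t" unfolding t_def using Qm by (rule LeastI)
    have tle: "t \<le> length ps - 1" unfolding t_def using Qm by (rule Least_le)
    have t0: "t \<noteq> 0" using Qt nQ0 by (cases "t = 0") auto
    have nQt: "\<not> Q (t - 1)"
    proof
      assume "Q (t-1)"
      then have "t \<le> t - 1" using Least_le[of Q "t-1"] t_def by simp
      then show False using t0 by simp
    qed
    define pre where "pre = take t ps"
    define suf where "suf = drop t ps"
    define a' where "a' = last pre"
    define b' where "b' = hd suf"
    have lenps: "t < length ps" using tle t0 by linarith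
    have pre_ne: "pre \<noteq> []" unfolding pre_def using t0 "1.prems" by simp
    have suf_ne: "suf \<noteq> []" unfolding suf_def using lenps by simp
    have ps_eq: "ps = pre @ suf" unfolding pre_def suf_def by simp
    have a'_eq: "a' = ps ! (t - 1)" unfolding a'_def pre_def using t0 lenps
      by (subst last_conv_nth) (auto simp: min_def)
    have drop_eq: "drop (t - 1) ps = a' # suf" unfolding a'_eq suf_def
      using Cons_nth_drop_Suc[of "t - 1" ps] lenps t0 by simp
    have preV: "set pre \<subseteq> V" and sufV: "set suf \<subseteq> V" using "1.prems" ps_eq by auto
    have a'V: "a' \<in> V" unfolding a'_def using preV pre_ne by auto
    have b'V: "b' \<in> V" unfolding b'_def using sufV suf_ne by auto
    have hd_pre: "hd pre = a" unfolding a_def ps_eq using pre_ne by simp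
    have last_suf: "last suf = b" unfolding b_def ps_eq using suf_ne by simp
    have wl: "walk_len W ps = walk_len W pre + W a' b' + walk_len W suf"
      unfolding ps_eq a'_def b'_def by (rule walk_len_append[OF pre_ne suf_ne])
    have wl2: "walk_len W (drop (t - 1) ps) = W a' b' + walk_len W suf"
      unfolding drop_eq b'_def using suf_ne by (cases suf) auto
    obtain Lp e Ls where fin: "walk_len W pre = ereal Lp" "W a' b' = ereal e" "walk_len W suf = ereal Ls"
      "Lp + e + Ls = L" "Lp \<ge> 0" "e \<ge> 0" "Ls \<ge> 0"
      using ereal_sum3_fin[OF walk_len_nonneg[where W=W, OF W_nonneg] W_nonneg walk_len_nonneg[where W=W, OF W_nonneg]]
        wl "1.prems"(3) by metis
    have Ls_le: "Ls \<le> \<delta> * D" using Qt fin unfolding Q_def suf_def by simp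
    have eLs: "\<delta> * D < e + Ls" using nQt wl2 fin unfolding Q_def by simp
    have sufw: "suf \<in> walks V b' b" using suf_ne sufV last_suf unfolding b'_def walks_iff by simp
    have gsuf: "gd b' b \<le> ereal Ls" using gdist_le_walk[OF sufw, of W] fin by simp
    have edge: "hop 1 a' b' \<le> ereal e"
      using hop_edge[OF a'V b'V, of 1 U] U_le_W[of a' b'] fin(2) by simp
    have ce: "e \<le> c * e" using c1 fin(6) mult_right_mono[of 1 c e] by simp
    have "length pre < length ps" unfolding pre_def using lenps by simp
    then have rec: "hop (hb l \<delta> D Lp) (hd pre) (last pre) \<le> ereal (c * Lp) \<or>
    (\<exists>u qs L1 L2. qs \<noteq> [] \<and> set qs \<subseteq> V \<and> hd qs = u \<and> last qs = last pre \<and>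
       walk_len W qs = ereal L2 \<and> L1 + L2 \<le> Lp \<and>
       hop (hb l \<delta> D L1 + 1) (hd pre) u \<le> ereal (c * L1) \<and>
       (\<exists>z\<in>A (Suc i). hop l u z \<le> ereal (2 * \<delta> * D)))"
      using "1.IH" pre_ne preV fin(1) by blast
    show ?thesis
      using rec
    proof
      assume A1: "hop (hb l \<delta> D Lp) (hd pre) (last pre) \<le> ereal (c * Lp)"
      then have A1': "hop (hb l \<delta> D Lp + 1) a b' \<le> ereal (c * Lp + e)"
        using hop_concat[OF finV _ edge] hd_pre a'_def by simp
      from IH b'V bV gsuf have
        "hop l b' b \<le> ereal (c * Ls) \<or> (\<exists>z\<in>A (Suc i). hop l b' z \<le> ereal (2 * Ls))" by blast
      then show ?thesis
      proof
        assume B1: "hop l b' b \<le> ereal (c * Ls)"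
        have "hop (hb l \<delta> D Lp + 1 + l) a b \<le> ereal (c * Lp + e + c * Ls)"
          using hop_concat[OF finV A1' B1] by simp
        moreover have "hb l \<delta> D Lp + 1 + l \<le> hb l \<delta> D L"
          using hb_step[OF l1 dD, where s=Lp and s'=L] fin eLs by simp
        moreover have "c * Lp + e + c * Ls \<le> c * L" using ce fin(4)
          by (simp add: ring_distribs flip: fin(4))
        ultimately have "hop (hb l \<delta> D L) a b \<le> ereal (c * L)"
          by (meson ereal_less_eq(3) hop_mono order_trans)
        then show ?thesis unfolding a_def b_def by simp
      next
        assume "\<exists>z\<in>A (Suc i). hop l b' z \<le> ereal (2 * Ls)"
        then obtain z where z: "z \<in> A (Suc i)" "hop l b' z \<le> ereal (2 * Ls)" by blast
        have z2: "hop l b' z \<le> ereal (2 * \<delta> * D)" using z Ls_le by (auto intro: order_trans)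
        have "hop (hb l \<delta> D (Lp + e) + 1) a b' \<le> hop (hb l \<delta> D Lp + 1) a b'"
          using hb_mono[of l \<delta> D Lp "Lp + e"] l1 dD fin by (intro hop_mono) auto
        also have "\<dots> \<le> ereal (c * (Lp + e))" using A1' ce by (auto simp: ring_distribs intro: order_trans)
        finally have "hop (hb l \<delta> D (Lp + e) + 1) a b' \<le> ereal (c * (Lp + e))" .
        then show ?thesis
          using suf_ne sufV last_suf fin z(1) z2 unfolding a_def b_def b'_def
          by (intro disjI2 exI[of _ b'] exI[of _ suf] exI[of _ "Lp + e"] exI[of _ Ls])
             (auto simp: b'_def)
      qed
    next
      assume "\<exists>u qs L1 L2. qs \<noteq> [] \<and> set qs \<subseteq> V \<and> hd qs = u \<and> last qs = last pre \<and>
       walk_len W qs = ereal L2 \<and> L1 + L2 \<le> Lp \<and>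
       hop (hb l \<delta> D L1 + 1) (hd pre) u \<le> ereal (c * L1) \<and>
       (\<exists>z\<in>A (Suc i). hop l u z \<le> ereal (2 * \<delta> * D))"
      then obtain u qs L1 L2 where q: "qs \<noteq> []" "set qs \<subseteq> V" "hd qs = u" "last qs = a'"
        "walk_len W qs = ereal L2" "L1 + L2 \<le> Lp"
        "hop (hb l \<delta> D L1 + 1) a u \<le> ereal (c * L1)"
        "\<exists>z\<in>A (Suc i). hop l u z \<le> ereal (2 * \<delta> * D)"
        using hd_pre a'_def by metis
      have "walk_len W (qs @ suf) = walk_len W qs + W a' b' + walk_len W suf"
        using walk_len_append[OF q(1) suf_ne, of W] q(4) b'_def by simp
      then have "walk_len W (qs @ suf) = ereal (L2 + e + Ls)" using q(5) fin by simp
      then show ?thesis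
        using q suf_ne sufV last_suf fin unfolding a_def b_def
        by (intro disjI2 exI[of _ u] exI[of _ "qs @ suf"] exI[of _ L1] exI[of _ "L2 + e + Ls"])
           (auto simp: a_def)
    qed
  qed
qed


lemma hop_weaken: "hop t a b \<le> ereal X \<Longrightarrow> t \<le> t' \<Longrightarrow> X \<le> Y \<Longrightarrow> hop t' a b \<le> ereal Y"
  by (meson ereal_less_eq(3) hop_mono order_trans)

definition Plev :: "nat \<Rightarrow> bool" where
  "Plev i \<longleftrightarrow> (\<forall>a\<in>V. \<forall>b\<in>V. \<forall>r. gd a b \<le> ereal r \<longrightarrow>
      (hop ((3/\<delta>)^i) a b \<le> ereal ((1 + 8 * \<delta> * real i) * r) \<or>
       (\<exists>z\<in>A (Suc i). hop ((3/\<delta>)^i) a z \<le> ereal (2 * r))))"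

lemma dk: "\<delta> * (8 * real k) < 1"
  using delta k_pos by (simp add: field_simps)

lemma d8: "\<delta> < 1/8"
proof -
  have "\<delta> * 8 \<le> \<delta> * (8 * real k)" using delta k_pos by simp
  then show ?thesis using dk by simp
qed

lemma l_ge1: "1 \<le> (3/\<delta>)^i"
proof -
  have "1 \<le> 3/\<delta>" using delta d8 by (simp add: field_simps)
  then show ?thesis by (rule one_le_power)
qed

lemma P0: "Plev 0"
  unfolding Plev_def
proof (intro ballI allI impI)
  fix a b r assume aV: "a \<in> V" and bV: "b \<in> V" and g: "gd a b \<le> ereal r"
  have r0: "0 \<le> r" using g gd_nonneg[of a b] by (metis ereal_less_eq(5) order_trans)
  show "hop ((3/\<delta>)^0) a b \<le> ereal ((1 + 8 * \<delta> * real 0) * r) \<or>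
       (\<exists>z\<in>A (Suc 0). hop ((3/\<delta>)^0) a z \<le> ereal (2 * r))"
  proof (cases "a \<in> A 1")
    case True
    have "hop 1 a a \<le> ereal (2 * r)" using hop_refl[OF aV, of 1 U] r0 by (auto intro: order_trans)
    then show ?thesis using True by auto
  next
    case False
    have a0: "a \<in> A 0 - A (Suc 0)" using False aV A0 by simp
    show ?thesis
    proof (cases "gd a b < setdist V W a (A (Suc 0))")
      case True
      have "(a, b) \<in> H" using H_bunch[OF _ a0 _ True] k_pos bV A0 by simp
      then have "hop 1 a b \<le> ereal r" using hop_edge[OF aV bV, of 1 U] U_H[of a b] g
        by (meson order_trans order_refl)
      then show ?thesis by simp
    next
      case False
      then have sd: "setdist V W a (A (Suc 0)) \<le> ereal r" using g by (simp add: not_less)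
      then have ne: "A (Suc 0) \<noteq> {}" using setdist_empty by auto
      have pa: "p a \<in> A (Suc 0)" "gd a (p a) = setdist V W a (A (Suc 0))"
        using p_def[OF _ a0 ne] k_pos by auto
      have paV: "p a \<in> V" using pa A_sub[of "Suc 0"] k_pos by auto
      have "(a, p a) \<in> H" using H_p[OF _ a0 ne] k_pos by simp
      then have "U a (p a) \<le> gd a (p a)" by (rule U_H)
      then have "hop 1 a (p a) \<le> gd a (p a)"
        using hop_edge[OF aV paV, of 1 U] by simp
      also have "\<dots> \<le> ereal r" using pa sd by simp
      also have "\<dots> \<le> ereal (2 * r)" using r0 by simp
      finally have "hop 1 a (p a) \<le> ereal (2 * r)" .
      then show ?thesis using pa by auto
    qed
  qed
qed


lemma Pstep:
  assumes Pi: "Plev i" and Si: "Suc i < k"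
  shows "Plev (Suc i)"
proof -
  define l where "l = (3/\<delta>)^i"
  define c where "c = 1 + 8 * \<delta> * real i"
  have l1: "1 \<le> l" unfolding l_def by (rule l_ge1)
  have c1: "1 \<le> c" unfolding c_def using delta by simp
  have l'eq: "(3/\<delta>)^(Suc i) = (3/\<delta>) * l" unfolding l_def by simp
  have c'eq: "1 + 8 * \<delta> * real (Suc i) = c + 8 * \<delta>" unfolding c_def by (simp add: algebra_simps)
  have cbig: "c + 8 * \<delta> * 2 \<le> 2"
  proof -
    have "real i + 2 \<le> real k" using Si by simp
    then have "\<delta> * (8 * (real i + 2)) \<le> \<delta> * (8 * real k)" using delta by (intro mult_left_mono) auto
    then show ?thesis using dk unfolding c_def by (simp add: algebra_simps)
  qed
  have IH: "\<forall>a\<in>V. \<forall>b\<in>V. \<forall>r. gd a b \<le> ereal r \<longrightarrow>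
      (hop l a b \<le> ereal (c * r) \<or> (\<exists>z\<in>A (Suc i). hop l a z \<le> ereal (2 * r)))"
    using Pi unfolding Plev_def l_def c_def .
  have AiV: "A (Suc i) \<subseteq> V" using A_sub Si by simp
  show ?thesis
    unfolding Plev_def l'eq c'eq
  proof (intro ballI allI impI)
    fix a b r assume aV: "a \<in> V" and bV: "b \<in> V" and g: "gd a b \<le> ereal r"
    have r0: "0 \<le> r" using g gd_nonneg[of a b] by (metis ereal_less_eq(5) order_trans)
    show "hop (3 / \<delta> * l) a b \<le> ereal ((c + 8 * \<delta>) * r) \<or>
          (\<exists>z\<in>A (Suc (Suc i)). hop (3 / \<delta> * l) a z \<le> ereal (2 * r))"
    proof (cases "r = 0")
      case True
      then have "gd a b = 0" using g gd_nonneg[of a b] by (simp add: zero_ereal_def)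
      then have "a = b" using gd_zero aV bV by blast
      moreover have "0 \<le> 3 / \<delta> * l" using delta l1 by simp
      ultimately show ?thesis using hop_refl[OF aV, of "3 / \<delta> * l" U] True
        by (simp add: zero_ereal_def)
    next
      case False
      define D where "D = r"
      have D0: "0 < D" using False r0 unfolding D_def by simp
      have dD: "0 < \<delta> * D" using D0 delta by simp
      obtain pi where pi: "pi \<in> walks V a b" "walk_len W pi = gd a b"
        using gdist_attain[where W=W, OF finV W_nonneg aV bV] by blast
      have "\<exists>L. walk_len W pi = ereal L"
        using pi(2) g gd_nonneg[of a b] by (cases "gd a b") auto
      then obtain L where L: "walk_len W pi = ereal L" by blast
      have LD: "L \<le> D" using L pi(2) g unfolding D_def by simp
      have L0: "0 \<le> L" using walk_len_nonneg[where W=W and ps=pi, OF W_nonneg] L by simp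
      have piV: "pi \<noteq> []" "set pi \<subseteq> V" "hd pi = a" "last pi = b" using pi(1) by (auto simp: walks_iff)
      note SC = scan[OF IH l1 c1 D0]
      have bud: "\<And>s1 s2. s1 + s2 \<le> D \<Longrightarrow> hb l \<delta> D s1 + hb l \<delta> D s2 + 2 * l + 3 \<le> (3 / \<delta>) * l"
        using hb_budget l1 delta d8 D0 by blast
      have hb0: "hb l \<delta> D 0 = l" by (simp add: hb_def)
      from SC[OF piV(1,2) L] show ?thesis
      proof
        assume h: "hop (hb l \<delta> D L) (hd pi) (last pi) \<le> ereal (c * L)"
        have "hb l \<delta> D L \<le> 3 / \<delta> * l" using bud[of L 0] LD hb0 l1 by simp
        moreover have "c * L \<le> (c + 8 * \<delta>) * r"
          using LD c1 L0 delta unfolding D_def by (intro mult_mono) auto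
        ultimately show ?thesis using h piV hop_weaken by blast
      next
        assume "\<exists>u qs L1 L2. qs \<noteq> [] \<and> set qs \<subseteq> V \<and> hd qs = u \<and> last qs = last pi \<and>
          walk_len W qs = ereal L2 \<and> L1 + L2 \<le> L \<and>
          hop (hb l \<delta> D L1 + 1) (hd pi) u \<le> ereal (c * L1) \<and>
          (\<exists>z\<in>A (Suc i). hop l u z \<le> ereal (2 * \<delta> * D))"
        then obtain u qs L1 L2 z1 where q: "qs \<noteq> []" "set qs \<subseteq> V" "hd qs = u" "last qs = b"
          "walk_len W qs = ereal L2" "L1 + L2 \<le> L"
          "hop (hb l \<delta> D L1 + 1) a u \<le> ereal (c * L1)"
          and z1: "z1 \<in> A (Suc i)" "hop l u z1 \<le> ereal (2 * \<delta> * D)"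
          using piV by metis
        have uV: "u \<in> V" using q by auto
        have z1V: "z1 \<in> V" using z1 AiV by auto
        have L20: "0 \<le> L2" using walk_len_nonneg[where W=W and ps=qs, OF W_nonneg] q(5) by simp
        have rq: "rev qs \<noteq> []" "set (rev qs) \<subseteq> V" "walk_len W (rev qs) = ereal L2"
          using q walk_len_rev[where W=W, OF W_sym] by auto
        have hr: "hd (rev qs) = b" "last (rev qs) = u" using q by (auto simp: hd_rev last_rev)
        have gz1: "gd u z1 \<le> ereal (2 * \<delta> * D)" using hop_ge[of u z1] z1(2) by (rule order_trans)
        from SC[OF rq] show ?thesis
        proof
          assume h: "hop (hb l \<delta> D L2) (hd (rev qs)) (last (rev qs)) \<le> ereal (c * L2)"
          then have h': "hop (hb l \<delta> D L2) u b \<le> ereal (c * L2)" using hr hop_symU by simp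
          have "hop (hb l \<delta> D L1 + 1 + hb l \<delta> D L2) a b \<le> ereal (c * L1 + c * L2)"
            using hop_concat[OF finV q(7) h'] .
          moreover have "hb l \<delta> D L1 + 1 + hb l \<delta> D L2 \<le> 3 / \<delta> * l"
            using bud[of L1 L2] q(6) LD l1 by simp
          moreover have "c * L1 + c * L2 \<le> (c + 8 * \<delta>) * r"
          proof -
            have "c * L1 + c * L2 = c * (L1 + L2)" by (simp add: algebra_simps)
            also have "\<dots> \<le> c * D" using q(6) LD c1 by (intro mult_left_mono) auto
            also have "\<dots> \<le> (c + 8 * \<delta>) * r" using delta D0 unfolding D_def
              by (intro mult_right_mono) auto
            finally show ?thesis .
          qed
          ultimately show ?thesis using hop_weaken by blast
        next
          assume "\<exists>u' qs' M1 M2. qs' \<noteq> [] \<and> set qs' \<subseteq> V \<and> hd qs' = u' \<and> last qs' = last (rev qs) \<and>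
            walk_len W qs' = ereal M2 \<and> M1 + M2 \<le> L2 \<and>
            hop (hb l \<delta> D M1 + 1) (hd (rev qs)) u' \<le> ereal (c * M1) \<and>
            (\<exists>z\<in>A (Suc i). hop l u' z \<le> ereal (2 * \<delta> * D))"
          then obtain u' qs' M1 M2 z2 where q': "qs' \<noteq> []" "set qs' \<subseteq> V" "hd qs' = u'" "last qs' = u"
            "walk_len W qs' = ereal M2" "M1 + M2 \<le> L2"
            "hop (hb l \<delta> D M1 + 1) b u' \<le> ereal (c * M1)"
            and z2: "z2 \<in> A (Suc i)" "hop l u' z2 \<le> ereal (2 * \<delta> * D)"
            using hr by metis
          have u'V: "u' \<in> V" using q' by auto
          have z2V: "z2 \<in> V" using z2 AiV by auto
          have M20: "0 \<le> M2" using walk_len_nonneg[where W=W and ps=qs', OF W_nonneg] q'(5) by simp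
          have "0 \<le> ereal (c * M1)"
            using gd_nonneg[of b u'] hop_ge[of b u' "hb l \<delta> D M1 + 1"] q'(7) by (meson order_trans)
          then have "0 \<le> c * M1" by simp
          then have M10: "0 \<le> M1" using c1 by (simp add: zero_le_mult_iff)
          have qs'w: "qs' \<in> walks V u' u" using q' by (simp add: walks_iff)
          have guu: "gd u u' \<le> ereal M2" using gdist_le_walk[OF qs'w, of W] q'(5) gd_sym by simp
          have gz2: "gd u' z2 \<le> ereal (2 * \<delta> * D)" using hop_ge[of u' z2] z2(2) by (rule order_trans)
          have t1: "gd z1 z2 \<le> gd z1 u + gd u z2" by (rule gd_tri[OF z1V uV z2V])
          have t2: "gd u z2 \<le> gd u u' + gd u' z2" by (rule gd_tri[OF uV u'V z2V])
          have "gd z1 z2 \<le> gd z1 u + (gd u u' + gd u' z2)"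
            using t1 add_left_mono[OF t2, of "gd z1 u"] by (rule order_trans)
          also have "\<dots> \<le> ereal (2 * \<delta> * D) + (ereal M2 + ereal (2 * \<delta> * D))"
            using gz1 guu gz2 gd_sym[of z1 u] by (intro add_mono) auto
          also have "\<dots> = ereal (4 * \<delta> * D + M2)" by (simp add: algebra_simps)
          finally have gzz: "gd z1 z2 \<le> ereal (4 * \<delta> * D + M2)" .
          have A1: "hop (hb l \<delta> D L1 + 1 + l) a z1 \<le> ereal (c * L1 + 2 * \<delta> * D)"
            using hop_concat[OF finV q(7) z1(2)] .
          have cL1: "c * L1 \<le> c * D" using q(6) L20 LD c1 by (intro mult_left_mono) auto
          show ?thesis
          proof (cases "z1 \<in> A (Suc (Suc i))")
            case True
            have "hb l \<delta> D L1 + 1 + l \<le> 3 / \<delta> * l" using bud[of L1 0] q(6) L20 LD hb0 l1 by simp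
            moreover have "c * L1 + 2 * \<delta> * D \<le> 2 * r"
            proof -
              have "c * D + 2 * \<delta> * D \<le> 2 * D"
                using cbig delta D0 mult_right_mono[of "c + 2 * \<delta>" 2 D] by (simp add: algebra_simps)
              then show ?thesis using cL1 unfolding D_def by simp
            qed
            ultimately show ?thesis using A1 True hop_weaken by blast
          next
            case False
            have z1d: "z1 \<in> A (Suc i) - A (Suc (Suc i))" using False z1 by simp
            show ?thesis
            proof (cases "gd z1 z2 < setdist V W z1 (A (Suc (Suc i)))")
              case True
              have "(z1, z2) \<in> H" by (rule H_bunch[OF Si z1d z2(1) True])
              then have "U z1 z2 \<le> gd z1 z2" by (rule U_H)
              then have e12: "hop 1 z1 z2 \<le> ereal (4 * \<delta> * D + M2)"
                using hop_edge[OF z1V z2V, of 1 U] gzz by simp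
              have h2: "hop l z2 u' \<le> ereal (2 * \<delta> * D)" using z2(2) hop_symU by simp
              have h3: "hop (hb l \<delta> D M1 + 1) u' b \<le> ereal (c * M1)" using q'(7) hop_symU by simp
              have "hop (hb l \<delta> D L1 + 1 + l + 1 + l + (hb l \<delta> D M1 + 1)) a b \<le>
                  ereal (c * L1 + 2 * \<delta> * D + (4 * \<delta> * D + M2) + 2 * \<delta> * D + c * M1)"
                using hop_concat[OF finV hop_concat[OF finV hop_concat[OF finV A1 e12] h2] h3] .
              moreover have "hb l \<delta> D L1 + 1 + l + 1 + l + (hb l \<delta> D M1 + 1) \<le> 3 / \<delta> * l"
                using bud[of L1 M1] q(6) q'(6) M20 LD by simp
              moreover have "c * L1 + 2 * \<delta> * D + (4 * \<delta> * D + M2) + 2 * \<delta> * D + c * M1 \<le> (c + 8 * \<delta>) * r"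
              proof -
                have "M2 \<le> c * M2" using c1 M20 mult_right_mono[of 1 c M2] by simp
                moreover have "c * (L1 + M1 + M2) \<le> c * D" using q(6) q'(6) LD c1 by (intro mult_left_mono) auto
                ultimately show ?thesis unfolding D_def by (simp add: algebra_simps)
              qed
              ultimately show ?thesis using hop_weaken by blast
            next
              case False
              then have sd: "setdist V W z1 (A (Suc (Suc i))) \<le> ereal (4 * \<delta> * D + M2)"
                using gzz by (simp add: not_less)
              then have ne: "A (Suc (Suc i)) \<noteq> {}" using setdist_empty by auto
              have pz: "p z1 \<in> A (Suc (Suc i))" "gd z1 (p z1) = setdist V W z1 (A (Suc (Suc i)))"
                using p_def[OF Si z1d ne] by auto
              have pzV: "p z1 \<in> V" using pz A_sub[of "Suc (Suc i)"] Si by auto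
              have "(z1, p z1) \<in> H" by (rule H_p[OF Si z1d ne])
              then have "U z1 (p z1) \<le> gd z1 (p z1)" by (rule U_H)
              then have e1: "hop 1 z1 (p z1) \<le> ereal (4 * \<delta> * D + M2)"
                using hop_edge[OF z1V pzV, of 1 U] pz sd by simp
              have "hop (hb l \<delta> D L1 + 1 + l + 1) a (p z1) \<le> ereal (c * L1 + 2 * \<delta> * D + (4 * \<delta> * D + M2))"
                using hop_concat[OF finV A1 e1] .
              moreover have "hb l \<delta> D L1 + 1 + l + 1 \<le> 3 / \<delta> * l"
                using bud[of L1 0] q(6) L20 LD hb0 l1 by simp
              moreover have "c * L1 + 2 * \<delta> * D + (4 * \<delta> * D + M2) \<le> 2 * r"
              proof -
                have "M2 \<le> c * M2" using c1 M20 mult_right_mono[of 1 c M2] by simp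
                moreover have "c * (L1 + M2) \<le> c * D" using q(6) q'(6) LD c1 M20 M10 by (intro mult_left_mono) auto
                moreover have "c * D + 6 * \<delta> * D \<le> 2 * D"
                  using cbig delta D0 mult_right_mono[of "c + 6 * \<delta>" 2 D] by (simp add: algebra_simps)
                ultimately show ?thesis unfolding D_def by (simp add: algebra_simps)
              qed
              ultimately show ?thesis using pz hop_weaken by blast
            qed
          qed
        qed
      qed
    qed
  qed
qed

lemma all_levels: "i < k \<Longrightarrow> Plev i"
proof (induction i)
  case 0 show ?case by (rule P0)
next
  case (Suc i) then show ?case using Pstep by simp
qed

end
theorem mainTheorem1:
  fixes V :: "'a set" and E :: "('a \<times> 'a) set" and w :: "'a \<Rightarrow> 'a \<Rightarrow> real"
    and k :: nat and A :: "nat \<Rightarrow> 'a set" and p :: "'a \<Rightarrow> 'a"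
    and \<delta> :: real and x y :: 'a
  assumes finV: "finite V"
    and E_sub: "E \<subseteq> V \<times> V"
    and E_sym: "\<And>u v. (u, v) \<in> E \<Longrightarrow> (v, u) \<in> E"
    and w_sym: "\<And>u v. (u, v) \<in> E \<Longrightarrow> w u v = w v u"
    and w_pos: "\<And>u v. (u, v) \<in> E \<Longrightarrow> w u v > 0"
    and k_pos: "k \<ge> 1"
    and A0: "A 0 = V"
    and Ak: "A k = {}"
    and A_mono: "\<And>i. i < k \<Longrightarrow> A (Suc i) \<subseteq> A i"
    and p_def: "\<And>i u. i < k \<Longrightarrow> u \<in> A i - A (Suc i) \<Longrightarrow> A (Suc i) \<noteq> {} \<Longrightarrow>
        p u \<in> A (Suc i) \<and>
        gdist V (graph_weight E w) u (p u) = setdist V (graph_weight E w) u (A (Suc i))"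
    and delta: "0 < \<delta>" "\<delta> < 1 / (8 * real k)"
    and xy: "x \<in> V" "y \<in> V"
  shows "\<forall>i<k.
    hopdist V (union_weight V (graph_weight E w) (bunch_edges V (graph_weight E w) k A p))
        ((3 / \<delta>) ^ i) x y
      \<le> ereal (1 + 8 * \<delta> * real i) * gdist V (graph_weight E w) x y
    \<or> (\<exists>z \<in> A (Suc i).
        hopdist V (union_weight V (graph_weight E w) (bunch_edges V (graph_weight E w) k A p))
          ((3 / \<delta>) ^ i) x z
        \<le> 2 * gdist V (graph_weight E w) x y)"
proof -
  have "setting V E w k A p \<delta>" unfolding setting_def
    using finV E_sym w_sym w_pos k_pos A0 A_mono p_def delta by blast
  interpret S: setting V E w k A p \<delta> by fact
  show ?thesis
  proof (intro allI impI)
    fix i assume ik: "i < k"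
    have P: "S.Plev i" by (rule S.all_levels[OF ik])
    let ?c = "1 + 8 * \<delta> * real i"
    have "0 \<le> 8 * \<delta> * real i" using delta by simp
    then have c0: "0 < ?c" by linarith
    show "hopdist V (union_weight V (graph_weight E w) (bunch_edges V (graph_weight E w) k A p))
        ((3 / \<delta>) ^ i) x y
      \<le> ereal ?c * gdist V (graph_weight E w) x y
    \<or> (\<exists>z \<in> A (Suc i).
        hopdist V (union_weight V (graph_weight E w) (bunch_edges V (graph_weight E w) k A p))
          ((3 / \<delta>) ^ i) x z
        \<le> 2 * gdist V (graph_weight E w) x y)"
    proof (cases "gdist V (graph_weight E w) x y = \<infinity>")
      case True
      then show ?thesis using c0 by simp
    next
      case False
      then obtain r where r: "gdist V (graph_weight E w) x y = ereal r"
        using S.gd_nonneg[of x y] by (cases "gdist V (graph_weight E w) x y") auto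
      then have "hopdist V (union_weight V (graph_weight E w) (bunch_edges V (graph_weight E w) k A p))
        ((3 / \<delta>) ^ i) x y \<le> ereal (?c * r) \<or> (\<exists>z\<in>A (Suc i).
        hopdist V (union_weight V (graph_weight E w) (bunch_edges V (graph_weight E w) k A p))
          ((3 / \<delta>) ^ i) x z \<le> ereal (2 * r))"
        using P xy unfolding S.Plev_def by auto
      then show ?thesis using r by simp
    qed
  qed
qed

end
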